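(* Let $(\mathcal{X},\mathcal{T})$ be a partially monotone system of order $N\geq2$ as in the context, where each $(X_i,\leq_i)$ is a bi-directed partially ordered set and $d_i$ is a complete metric on $X_i$. Assume there exists $\varphi\in\Phi$ such that $$d_i\big(T_i(x),T_i(y)\big)\leq\varphi\Big(\max_{1\le j\le N}d_j(x_j,y_j)\Big)\quad\text{for all }i\in\{1,\ldots,N\}\text{ and all }x,y\in X\text{ with }x\preccurlyeq_i y.$$ Assume also that either (d1) each $T_i$ is continuous (with respect to the product topology on $X$), or (d2) for every $i$, every nondecreasing convergent sequence in $X_i$ is bounded from above by its limit and every nonincreasing convergent sequence in $X_i$ is bounded from below by its limit. If there exist $x^0,y^0\in X$ such that $$x^0_i\leq_i T_i(\sigma_i(x^0,y^0))\quad\text{and}\quad y^0_i\geq_i T_i(\sigma_i(y^0,x^0))\quad\text{for all }i\in\{1,\ldots,N\},$$ then the system $x_i=T_i(x_1,\ldots,x_N)$, $i=1,\ldots,N$, has a unique solution $x^\ast\in X$. Moreover, for every $u^0,v^0\in X$, the sequences $(u^n),(v^n)$ in $X$ defined by $$u^{n+1}_i=T_i(\sigma_i(u^n,v^n)),\qquad v^{n+1}_i=T_i(\sigma_i(v^n,u^n))\qquad(i=1,\ldots,N,\ n\geq0)$$ satisfy $u^n_i\to x^\ast_i$ and $v^n_i\to x^\ast_i$ as $n\to\infty$ for all $i$.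
   Context: Let $N\geq2$ and let $(X_i,\leq_i)$, $i=1,\ldots,N$, be quasi-ordered sets. Let $X=X_1\times\cdots\times X_N$, with components $x=(x_1,\ldots,x_N)$. Let $T_i:X\to X_i$, $i=1,\dots,N$. The system is partially monotone if for each pair $(i,j)$ a type $\epsilon_{i,j}\in\{+,-\}$ is fixed such that $T_i$ is nondecreasing in its $j$-th variable (all other variables fixed) when $\epsilon_{i,j}=+$ and nonincreasing in its $j$-th variable when $\epsilon_{i,j}=-$ (if $T_i$ is constant in the $j$-th variable either type may be chosen, but once fixed it is used consistently). For each $i$ define $\sigma_i=(\sigma_{i,1},\ldots,\sigma_{i,N}):X^2\to X$ by $\sigma_{i,j}(x,y)=x_j$ if $\epsilon_{i,j}=+$ and $\sigma_{i,j}(x,y)=y_j$ if $\epsilon_{i,j}=-$. The quasi-order $\preccurlyeq_i$ on $X$ is: $x\preccurlyeq_i y$ iff for all $j$, $x_j\leq_j y_j$ when $\epsilon_{i,j}=+$ and $x_j\geq_j y_j$ when $\epsilon_{i,j}=-$. A quasi-ordered set is bi-directed if every two-element subset has both a lower bound and an upper bound. $\Phi$ is the set of nondecreasing functions $\varphi:[0,\infty)\to[0,\infty)$ with $\varphi^n(t)\to0$ as $n\to\infty$ for every $t\geq0$ ($\varphi^n$ the $n$-th iterate). *)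

theory Defs
  imports "HOL-Analysis.Analysis"
begin

text \<open>Components are indexed by 0..<N. All spaces X i live in one ambient type 'a;
  a point of the product X = X_0 x ... x X_(N-1) is an extensional function in PiE {..<N} X.\<close>

definition partial_order_on_set :: "'a set \<Rightarrow> ('a \<Rightarrow> 'a \<Rightarrow> bool) \<Rightarrow> bool" where
  "partial_order_on_set A le \<longleftrightarrow>
     (\<forall>x\<in>A. le x x) \<and>
     (\<forall>x\<in>A. \<forall>y\<in>A. le x y \<and> le y x \<longrightarrow> x = y) \<and>
     (\<forall>x\<in>A. \<forall>y\<in>A. \<forall>z\<in>A. le x y \<and> le y z \<longrightarrow> le x z)"

definition bi_directed :: "'a set \<Rightarrow> ('a \<Rightarrow> 'a \<Rightarrow> bool) \<Rightarrow> bool" where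
  "bi_directed A le \<longleftrightarrow>
     (\<forall>x\<in>A. \<forall>y\<in>A. (\<exists>l\<in>A. le l x \<and> le l y) \<and> (\<exists>u\<in>A. le x u \<and> le y u))"

definition Phi :: "(real \<Rightarrow> real) \<Rightarrow> bool" where
  "Phi \<phi> \<longleftrightarrow>
     (\<forall>t\<ge>0. \<phi> t \<ge> 0) \<and>
     (\<forall>s t. 0 \<le> s \<longrightarrow> s \<le> t \<longrightarrow> \<phi> s \<le> \<phi> t) \<and>
     (\<forall>t\<ge>0. (\<lambda>n. (\<phi> ^^ n) t) \<longlonglongrightarrow> 0)"

text \<open>Partial monotonicity with types eps i j (True = '+', False = '-').\<close>
definition partially_monotone ::
  "nat \<Rightarrow> (nat \<Rightarrow> 'a set) \<Rightarrow> (nat \<Rightarrow> 'a \<Rightarrow> 'a \<Rightarrow> bool) \<Rightarrow> (nat \<Rightarrow> nat \<Rightarrow> bool)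
     \<Rightarrow> (nat \<Rightarrow> (nat \<Rightarrow> 'a) \<Rightarrow> 'a) \<Rightarrow> bool" where
  "partially_monotone N X le eps T \<longleftrightarrow>
     (\<forall>i<N. \<forall>j<N. \<forall>x\<in>PiE {..<N} X. \<forall>y\<in>PiE {..<N} X.
        (\<forall>k<N. k \<noteq> j \<longrightarrow> x k = y k) \<longrightarrow> le j (x j) (y j) \<longrightarrow>
        (if eps i j then le i (T i x) (T i y) else le i (T i y) (T i x)))"

definition sigma :: "nat \<Rightarrow> (nat \<Rightarrow> nat \<Rightarrow> bool) \<Rightarrow> nat \<Rightarrow> (nat \<Rightarrow> 'a) \<Rightarrow> (nat \<Rightarrow> 'a) \<Rightarrow> nat \<Rightarrow> 'a" where
  "sigma N eps i x y = (\<lambda>j. if j < N then (if eps i j then x j else y j) else undefined)"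

definition prec :: "nat \<Rightarrow> (nat \<Rightarrow> 'a \<Rightarrow> 'a \<Rightarrow> bool) \<Rightarrow> (nat \<Rightarrow> nat \<Rightarrow> bool) \<Rightarrow> nat
     \<Rightarrow> (nat \<Rightarrow> 'a) \<Rightarrow> (nat \<Rightarrow> 'a) \<Rightarrow> bool" where
  "prec N le eps i x y \<longleftrightarrow>
     (\<forall>j<N. if eps i j then le j (x j) (y j) else le j (y j) (x j))"

end

theory Submission imports Defs begin

lemma Phi_mono: "Phi \<phi> \<Longrightarrow> 0 \<le> s \<Longrightarrow> s \<le> t \<Longrightarrow> \<phi> s \<le> \<phi> t"
  unfolding Phi_def by blast

lemma Phi_nn: "Phi \<phi> \<Longrightarrow> 0 \<le> s \<Longrightarrow> 0 \<le> \<phi> s"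
  unfolding Phi_def by blast

lemma Phi_lim: "Phi \<phi> \<Longrightarrow> 0 \<le> t \<Longrightarrow> (\<lambda>n. (\<phi>^^n) t) \<longlonglongrightarrow> 0"
  unfolding Phi_def by blast

lemma Phi_iter:
  assumes "Phi \<phi>" "0 \<le> s" "s \<le> t"
  shows "0 \<le> (\<phi>^^n) s \<and> (\<phi>^^n) s \<le> (\<phi>^^n) t"
  using assms(2,3)
proof (induction n)
  case 0 then show ?case by simp
next
  case (Suc n)
  then show ?case using Phi_mono[OF assms(1)] Phi_nn[OF assms(1)] by simp
qed

lemma Phi_lt:
  assumes P: "Phi \<phi>" and t: "0 < t"
  shows "\<phi> t < t"
proof (rule ccontr)
  assume "\<not> \<phi> t < t"
  hence lt: "t \<le> \<phi> t" by simp
  have ge: "t \<le> (\<phi>^^n) t" for n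
  proof (induction n)
    case 0 then show ?case by simp
  next
    case (Suc n)
    have "\<phi> t \<le> \<phi> ((\<phi>^^n) t)" using Phi_mono[OF P _ Suc] t by simp
    then show ?case using lt by simp
  qed
  have "(\<lambda>n. (\<phi>^^n) t) \<longlonglongrightarrow> 0" using Phi_lim[OF P] t by simp
  hence "t \<le> 0" by (rule LIMSEQ_le_const) (use ge in auto)
  thus False using t by simp
qed

lemma Phi_le:
  assumes P: "Phi \<phi>" and t: "0 \<le> t"
  shows "\<phi> t \<le> t"
proof (cases "t = 0")
  case True
  show ?thesis
  proof (rule ccontr)
    assume "\<not> \<phi> t \<le> t"
    hence pos: "0 < \<phi> 0" using True by simp
    have "\<phi> (\<phi> 0) < \<phi> 0" using Phi_lt[OF P pos] .
    moreover have "\<phi> 0 \<le> \<phi> (\<phi> 0)" using Phi_mono[OF P _ ] pos by simp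
    ultimately show False by simp
  qed
next
  case False
  then show ?thesis using Phi_lt[OF P, of t] t by simp
qed

lemma abstract_fp:
  fixes S :: "'b set" and R :: "'b \<Rightarrow> 'b \<Rightarrow> bool" and \<rho> :: "'b \<Rightarrow> 'b \<Rightarrow> real" and F :: "'b \<Rightarrow> 'b"
  assumes phi: "Phi \<phi>"
  and FS: "\<And>p. p \<in> S \<Longrightarrow> F p \<in> S"
  and Rrefl: "\<And>p. p \<in> S \<Longrightarrow> R p p"
  and Rtrans: "\<And>p q r. p \<in> S \<Longrightarrow> q \<in> S \<Longrightarrow> r \<in> S \<Longrightarrow> R p q \<Longrightarrow> R q r \<Longrightarrow> R p r"
  and Rmono: "\<And>p q. p \<in> S \<Longrightarrow> q \<in> S \<Longrightarrow> R p q \<Longrightarrow> R (F p) (F q)"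
  and Rbid: "\<And>p q. p \<in> S \<Longrightarrow> q \<in> S \<Longrightarrow> \<exists>r\<in>S. R r p \<and> R r q"
  and rnn: "\<And>p q. 0 \<le> \<rho> p q"
  and rsym: "\<And>p q. \<rho> p q = \<rho> q p"
  and rtri: "\<And>p q r. p \<in> S \<Longrightarrow> q \<in> S \<Longrightarrow> r \<in> S \<Longrightarrow> \<rho> p r \<le> \<rho> p q + \<rho> q r"
  and rzero: "\<And>p q. p \<in> S \<Longrightarrow> q \<in> S \<Longrightarrow> \<rho> p q = 0 \<Longrightarrow> p = q"
  and rrefl: "\<And>p. p \<in> S \<Longrightarrow> \<rho> p p = 0"
  and contr: "\<And>p q. p \<in> S \<Longrightarrow> q \<in> S \<Longrightarrow> R p q \<Longrightarrow> \<rho> (F p) (F q) \<le> \<phi> (\<rho> p q)"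
  and complete: "\<And>s. (\<forall>n. s n \<in> S) \<Longrightarrow> (\<forall>e>0. \<exists>M. \<forall>m\<ge>M. \<forall>n\<ge>M. \<rho> (s m) (s n) \<le> e)
                   \<Longrightarrow> \<exists>p\<in>S. (\<lambda>n. \<rho> (s n) p) \<longlonglongrightarrow> 0"
  and closed: "\<And>s p. (\<forall>n. s n \<in> S) \<Longrightarrow> (\<forall>n. s (Suc n) = F (s n)) \<Longrightarrow> (\<forall>m n. m \<le> n \<longrightarrow> R (s m) (s n))
                   \<Longrightarrow> p \<in> S \<Longrightarrow> (\<lambda>n. \<rho> (s n) p) \<longlonglongrightarrow> 0 \<Longrightarrow> F p = p"
  and p0: "p0 \<in> S" "R p0 (F p0)"
  shows "\<exists>p\<in>S. F p = p \<and> (\<forall>q\<in>S. F q = q \<longrightarrow> q = p) \<and> (\<forall>w\<in>S. (\<lambda>n. \<rho> ((F^^n) w) p) \<longlonglongrightarrow> 0)"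
proof -
  have FnS: "(F^^n) p \<in> S" if "p \<in> S" for n p
    using that by (induction n) (auto intro: FS)
  have iterR: "R ((F^^n) p) ((F^^n) q) \<and> \<rho> ((F^^n) p) ((F^^n) q) \<le> (\<phi>^^n) (\<rho> p q)"
    if "p \<in> S" "q \<in> S" "R p q" for n p q
  proof (induction n)
    case 0 then show ?case using that by simp
  next
    case (Suc n)
    have "\<rho> ((F^^Suc n) p) ((F^^Suc n) q) \<le> \<phi> (\<rho> ((F^^n) p) ((F^^n) q))"
      using contr[OF FnS[OF that(1)] FnS[OF that(2)]] Suc by simp
    also have "\<dots> \<le> \<phi> ((\<phi>^^n) (\<rho> p q))"
      using Phi_mono[OF phi rnn] Suc by blast
    finally show ?case using Rmono[OF FnS[OF that(1)] FnS[OF that(2)]] Suc by simp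
  qed
  have phi0: "(\<lambda>n. (\<phi>^^n) t) \<longlonglongrightarrow> 0" if "0 \<le> t" for t
    using Phi_lim[OF phi that] .
  have attract: "(\<lambda>n. \<rho> ((F^^n) w) p) \<longlonglongrightarrow> 0" if p: "p \<in> S" "F p = p" and w: "w \<in> S" for p w
  proof -
    obtain r where r: "r \<in> S" "R r w" "R r p" using Rbid[OF w p(1)] by blast
    have Fp: "(F^^n) p = p" for n using p(2) by (induction n) auto
    have le: "\<rho> ((F^^n) w) p \<le> (\<phi>^^n) (\<rho> r w) + (\<phi>^^n) (\<rho> r p)" for n
    proof -
      have "\<rho> ((F^^n) w) p \<le> \<rho> ((F^^n) w) ((F^^n) r) + \<rho> ((F^^n) r) p"
        using rtri FnS r w p by blast
      also have "\<dots> = \<rho> ((F^^n) r) ((F^^n) w) + \<rho> ((F^^n) r) ((F^^n) p)"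
        using rsym Fp by simp
      also have "\<dots> \<le> (\<phi>^^n) (\<rho> r w) + (\<phi>^^n) (\<rho> r p)"
        using iterR[OF r(1) w r(2), of n] iterR[OF r(1) p(1) r(3), of n] by (simp add: add_mono)
      finally show ?thesis .
    qed
    have h: "(\<lambda>n. (\<phi>^^n) (\<rho> r w) + (\<phi>^^n) (\<rho> r p)) \<longlonglongrightarrow> 0 + 0"
      by (intro tendsto_add phi0 rnn)
    show ?thesis
    proof (rule real_tendsto_sandwich[where f="\<lambda>n. 0" and h="\<lambda>n. (\<phi>^^n) (\<rho> r w) + (\<phi>^^n) (\<rho> r p)"])
      show "\<forall>\<^sub>F n in sequentially. 0 \<le> \<rho> ((F^^n) w) p" using rnn by simp
      show "\<forall>\<^sub>F n in sequentially. \<rho> ((F^^n) w) p \<le> (\<phi>^^n) (\<rho> r w) + (\<phi>^^n) (\<rho> r p)"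
        using le by simp
      show "(\<lambda>n. 0::real) \<longlonglongrightarrow> 0" by simp
      show "(\<lambda>n. (\<phi>^^n) (\<rho> r w) + (\<phi>^^n) (\<rho> r p)) \<longlonglongrightarrow> 0" using h by simp
    qed
  qed
  define s where "s n = (F^^n) p0" for n
  have sS: "s n \<in> S" for n using FnS p0 s_def by simp
  have sSuc: "s (Suc n) = F (s n)" for n by (simp add: s_def)
  have sR1: "R (s n) (s (Suc n))" for n
  proof (induction n)
    case 0 then show ?case using p0 by (simp add: s_def)
  next
    case (Suc n) then show ?case using Rmono[OF sS sS Suc] sSuc by simp
  qed
  have sRk: "R (s m) (s (m + k))" for m k
  proof (induction k)
    case 0 then show ?case using Rrefl sS by simp
  next
    case (Suc k) then show ?case using Rtrans[OF sS sS sS Suc sR1[of "m+k"]] by simp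
  qed
  have sR: "\<forall>m n. m \<le> n \<longrightarrow> R (s m) (s n)"
  proof (intro allI impI)
    fix m n :: nat assume "m \<le> n"
    then obtain k where "n = m + k" using le_Suc_ex by blast
    thus "R (s m) (s n)" using sRk by simp
  qed
  have step: "\<rho> (s n) (s (Suc n)) \<le> (\<phi>^^n) (\<rho> p0 (F p0))" for n
    using iterR[OF p0(1) FS[OF p0(1)] p0(2), of n] by (simp add: s_def funpow_swap1)
  have step0: "(\<lambda>n. \<rho> (s n) (s (Suc n))) \<longlonglongrightarrow> 0"
  proof (rule real_tendsto_sandwich[where f="\<lambda>n. 0" and h="\<lambda>n. (\<phi>^^n) (\<rho> p0 (F p0))"])
    show "\<forall>\<^sub>F n in sequentially. 0 \<le> \<rho> (s n) (s (Suc n))" using rnn by simp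
    show "\<forall>\<^sub>F n in sequentially. \<rho> (s n) (s (Suc n)) \<le> (\<phi>^^n) (\<rho> p0 (F p0))"
      using step by simp
    show "(\<lambda>n. 0::real) \<longlonglongrightarrow> 0" by simp
    show "(\<lambda>n. (\<phi>^^n) (\<rho> p0 (F p0))) \<longlonglongrightarrow> 0" using phi0 rnn by blast
  qed
  have cauchy: "\<forall>e>0. \<exists>M. \<forall>m\<ge>M. \<forall>n\<ge>M. \<rho> (s m) (s n) \<le> e"
  proof (intro allI impI)
    fix e :: real assume e: "e > 0"
    define \<epsilon> where "\<epsilon> = e / 2"
    have \<epsilon>: "\<epsilon> > 0" using e by (simp add: \<epsilon>_def)
    have gap: "\<epsilon> - \<phi> \<epsilon> > 0" using Phi_lt[OF phi \<epsilon>] by simp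
    obtain M where M0: "\<And>n. n \<ge> M \<Longrightarrow> norm (\<rho> (s n) (s (Suc n)) - 0) < \<epsilon> - \<phi> \<epsilon>"
      using step0 gap unfolding LIMSEQ_iff by blast
    have M: "\<rho> (s n) (s (Suc n)) < \<epsilon> - \<phi> \<epsilon>" if "n \<ge> M" for n
      using M0[OF that] rnn[of "s n" "s (Suc n)"] by simp
    have ball: "\<rho> (s M) (s (M + k)) \<le> \<epsilon>" for k
    proof (induction k)
      case 0 then show ?case using rrefl sS \<epsilon> by simp
    next
      case (Suc k)
      have "\<rho> (s M) (s (M + Suc k)) \<le> \<rho> (s M) (s (Suc M)) + \<rho> (s (Suc M)) (s (M + Suc k))"
        using rtri sS by blast
      also have "\<rho> (s (Suc M)) (s (M + Suc k)) \<le> \<phi> (\<rho> (s M) (s (M + k)))"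
        using contr[OF sS sS sRk[of M k]] by (simp add: sSuc)
      also have "\<dots> \<le> \<phi> \<epsilon>" using Phi_mono[OF phi rnn Suc] .
      finally show ?case using M[of M] by simp
    qed
    show "\<exists>M. \<forall>m\<ge>M. \<forall>n\<ge>M. \<rho> (s m) (s n) \<le> e"
    proof (intro exI allI impI)
      fix m n assume mn: "M \<le> m" "M \<le> n"
      have "\<rho> (s m) (s n) \<le> \<rho> (s m) (s M) + \<rho> (s M) (s n)" using rtri sS by blast
      also have "\<dots> \<le> \<epsilon> + \<epsilon>"
      proof -
        have "\<rho> (s m) (s M) \<le> \<epsilon>" using ball[of "m - M"] mn rsym[of "s m" "s M"] by simp
        moreover have "\<rho> (s M) (s n) \<le> \<epsilon>" using ball[of "n - M"] mn by simp
        ultimately show ?thesis by simp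
      qed
      finally show "\<rho> (s m) (s n) \<le> e" by (simp add: \<epsilon>_def)
    qed
  qed
  obtain p where p: "p \<in> S" "(\<lambda>n. \<rho> (s n) p) \<longlonglongrightarrow> 0" using complete[OF _ cauchy] sS by blast
  have Fp: "F p = p" using closed[OF _ _ sR p] sS sSuc by blast
  have uniq: "q = p" if "q \<in> S" "F q = q" for q
  proof -
    have Fq: "(F^^n) q = q" for n using that(2) by (induction n) auto
    have "(\<lambda>n. \<rho> q p) \<longlonglongrightarrow> 0" using attract[OF p(1) Fp that(1)] Fq by simp
    hence "\<rho> q p = 0" by (simp add: LIMSEQ_const_iff)
    thus ?thesis using rzero that p by blast
  qed
  show ?thesis using p(1) Fp uniq attract[OF p(1) Fp] by blast
qed


definition Dm :: "nat \<Rightarrow> (nat \<Rightarrow> 'a \<Rightarrow> 'a \<Rightarrow> real) \<Rightarrow> (nat \<Rightarrow> 'a) \<Rightarrow> (nat \<Rightarrow> 'a) \<Rightarrow> real" where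
  "Dm N d x y = Max ((\<lambda>j. d j (x j) (y j)) ` {..<N})"

lemma Dm_ge: "j < N \<Longrightarrow> d j (x j) (y j) \<le> Dm N d x y"
  unfolding Dm_def by (rule Max_ge) auto

lemma Dm_le_iff: "0 < N \<Longrightarrow> Dm N d x y \<le> e \<longleftrightarrow> (\<forall>j<N. d j (x j) (y j) \<le> e)"
  unfolding Dm_def by (subst Max_le_iff) auto

lemma Dm_le_sum:
  assumes "0 < N" "\<And>j. j < N \<Longrightarrow> 0 \<le> d j (x j) (y j)"
  shows "Dm N d x y \<le> (\<Sum>j<N. d j (x j) (y j))"
  unfolding Dm_le_iff[OF assms(1)]
proof (intro allI impI)
  fix j assume "j < N"
  then show "d j (x j) (y j) \<le> (\<Sum>j<N. d j (x j) (y j))"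
    using assms(2) by (intro member_le_sum) auto
qed

lemma sigma_restrict:
  "sigma N eps i (restrict x {..<N}) (restrict y {..<N}) = sigma N eps i x y"
  by (auto simp: sigma_def)

lemma sigma_in:
  assumes "x \<in> PiE {..<N} X" "y \<in> PiE {..<N} X"
  shows "sigma N eps i x y \<in> PiE {..<N} X"
  using assms by (auto simp: sigma_def PiE_iff extensional_def)

lemma sigma_same:
  assumes "x \<in> PiE {..<N} X"
  shows "sigma N eps i x x = x"
  using assms by (auto simp: sigma_def PiE_iff extensional_def)

lemma T_mono:
  assumes pm: "partially_monotone N X le eps T"
    and order: "\<And>i. i < N \<Longrightarrow> partial_order_on_set (X i) (le i)"
    and T_maps: "\<And>i x. i < N \<Longrightarrow> x \<in> PiE {..<N} X \<Longrightarrow> T i x \<in> X i"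
    and i: "i < N" and x: "x \<in> PiE {..<N} X" and y: "y \<in> PiE {..<N} X"
    and pr: "prec N le eps i x y"
  shows "le i (T i x) (T i y)"
proof -
  define z where "z k = restrict (\<lambda>j. if j < k then y j else x j) {..<N}" for k
  have zS: "z k \<in> PiE {..<N} X" for k using x y by (auto simp: z_def PiE_iff)
  have z0: "z 0 = x" using x by (auto simp: z_def PiE_iff extensional_def)
  have zN: "z N = y" using y by (auto simp: z_def PiE_iff extensional_def)
  have po: "partial_order_on_set (X i) (le i)" using order i .
  have step: "le i (T i (z k)) (T i (z (Suc k)))" if k: "k < N" for k
  proof -
    have same: "\<forall>m<N. m \<noteq> k \<longrightarrow> z k m = z (Suc k) m" by (auto simp: z_def)
    have zk: "z k k = x k" "z (Suc k) k = y k" using k by (auto simp: z_def)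
    show ?thesis
    proof (cases "eps i k")
      case True
      hence "le k (x k) (y k)" using pr k unfolding prec_def by auto
      thus ?thesis using pm i k zS same True zk unfolding partially_monotone_def
        by (metis (no_types, lifting))
    next
      case False
      hence "le k (y k) (x k)" using pr k unfolding prec_def by auto
      moreover have "\<forall>m<N. m \<noteq> k \<longrightarrow> z (Suc k) m = z k m" using same by auto
      ultimately show ?thesis using pm i k zS False zk unfolding partially_monotone_def
        by (metis (no_types, lifting))
    qed
  qed
  have "le i (T i (z 0)) (T i (z k))" if "k \<le> N" for k
    using that
  proof (induction k)
    case 0 then show ?case using po T_maps[OF i zS] unfolding partial_order_on_set_def by blast
  next
    case (Suc k)
    have a: "le i (T i (z 0)) (T i (z k))" using Suc by simp
    have b: "le i (T i (z k)) (T i (z (Suc k)))" using step Suc by simp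
    show ?case using po a b T_maps[OF i zS] unfolding partial_order_on_set_def by blast
  qed
  then show ?thesis using z0 zN by (metis order_refl)
qed

theorem theorem5:
  fixes N :: nat
    and X :: "nat \<Rightarrow> 'a set"
    and le :: "nat \<Rightarrow> 'a \<Rightarrow> 'a \<Rightarrow> bool"
    and d :: "nat \<Rightarrow> 'a \<Rightarrow> 'a \<Rightarrow> real"
    and eps :: "nat \<Rightarrow> nat \<Rightarrow> bool"
    and T :: "nat \<Rightarrow> (nat \<Rightarrow> 'a) \<Rightarrow> 'a"
    and \<phi> :: "real \<Rightarrow> real"
    and x0 y0 :: "nat \<Rightarrow> 'a"
  assumes N2: "N \<ge> 2"
    and order: "\<And>i. i < N \<Longrightarrow> partial_order_on_set (X i) (le i)"
    and bidir: "\<And>i. i < N \<Longrightarrow> bi_directed (X i) (le i)"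
    and metric: "\<And>i. i < N \<Longrightarrow> Metric_space (X i) (d i)"
    and complete: "\<And>i. i < N \<Longrightarrow> Metric_space.mcomplete (X i) (d i)"
    and T_maps: "\<And>i x. i < N \<Longrightarrow> x \<in> PiE {..<N} X \<Longrightarrow> T i x \<in> X i"
    and pm: "partially_monotone N X le eps T"
    and phi: "Phi \<phi>"
    and contraction: "\<And>i x y. i < N \<Longrightarrow> x \<in> PiE {..<N} X \<Longrightarrow> y \<in> PiE {..<N} X \<Longrightarrow>
        prec N le eps i x y \<Longrightarrow>
        d i (T i x) (T i y) \<le> \<phi> (Max ((\<lambda>j. d j (x j) (y j)) ` {..<N}))"
    and d1_d2:
      "(\<forall>i<N. continuous_map
                (product_topology (\<lambda>j. Metric_space.mtopology (X j) (d j)) {..<N})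
                (Metric_space.mtopology (X i) (d i)) (T i))
       \<or> (\<forall>i<N. \<forall>s l. range s \<subseteq> X i \<longrightarrow>
                limitin (Metric_space.mtopology (X i) (d i)) s l sequentially \<longrightarrow>
                ((\<forall>m n. m \<le> n \<longrightarrow> le i (s m) (s n)) \<longrightarrow> (\<forall>n. le i (s n) l)) \<and>
                ((\<forall>m n. m \<le> n \<longrightarrow> le i (s n) (s m)) \<longrightarrow> (\<forall>n. le i l (s n))))"
    and x0: "x0 \<in> PiE {..<N} X"
    and y0: "y0 \<in> PiE {..<N} X"
    and x0_sub: "\<And>i. i < N \<Longrightarrow> le i (x0 i) (T i (sigma N eps i x0 y0))"
    and y0_sup: "\<And>i. i < N \<Longrightarrow> le i (T i (sigma N eps i y0 x0)) (y0 i)"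
  shows "\<exists>xs \<in> PiE {..<N} X.
           (\<forall>i<N. T i xs = xs i) \<and>
           (\<forall>z \<in> PiE {..<N} X. (\<forall>i<N. T i z = z i) \<longrightarrow> z = xs) \<and>
           (\<forall>u v :: nat \<Rightarrow> nat \<Rightarrow> 'a.
              u 0 \<in> PiE {..<N} X \<longrightarrow> v 0 \<in> PiE {..<N} X \<longrightarrow>
              (\<forall>n. \<forall>i<N. u (Suc n) i = T i (sigma N eps i (u n) (v n)) \<and>
                          v (Suc n) i = T i (sigma N eps i (v n) (u n))) \<longrightarrow>
              (\<forall>i<N. limitin (Metric_space.mtopology (X i) (d i)) (\<lambda>n. u n i) (xs i) sequentially \<and>
                     limitin (Metric_space.mtopology (X i) (d i)) (\<lambda>n. v n i) (xs i) sequentially))"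
proof -
  have N0: "0 < N" using N2 by simp
  note ms = metric
  have dnn: "\<And>j a b. j < N \<Longrightarrow> 0 \<le> d j a b" using Metric_space.nonneg[OF metric] by this
  have dcom: "\<And>j a b. j < N \<Longrightarrow> d j a b = d j b a" using Metric_space.commute[OF metric] by this
  have dzero: "\<And>j a b. j < N \<Longrightarrow> a \<in> X j \<Longrightarrow> b \<in> X j \<Longrightarrow> d j a b = 0 \<longleftrightarrow> a = b"
    using Metric_space.zero[OF metric] by this
  have dtri: "\<And>j a b c. j < N \<Longrightarrow> a \<in> X j \<Longrightarrow> b \<in> X j \<Longrightarrow> c \<in> X j \<Longrightarrow> d j a c \<le> d j a b + d j b c"
    using Metric_space.triangle[OF metric] by this
  have lim_iff: "\<And>j f l. j < N \<Longrightarrow> limitin (Metric_space.mtopology (X j) (d j)) f l sequentially \<longleftrightarrow>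
      l \<in> X j \<and> (\<forall>\<^sub>F n in sequentially. f n \<in> X j) \<and> (\<lambda>n. d j (f n) l) \<longlonglongrightarrow> 0"
    using Metric_space.limitin_metric_dist_null[OF metric] by this
  have leR: "\<And>j a. j < N \<Longrightarrow> a \<in> X j \<Longrightarrow> le j a a"
    using order unfolding partial_order_on_set_def by blast
  have leT: "\<And>j a b c. j < N \<Longrightarrow> a \<in> X j \<Longrightarrow> b \<in> X j \<Longrightarrow> c \<in> X j \<Longrightarrow> le j a b \<Longrightarrow> le j b c \<Longrightarrow> le j a c"
    using order unfolding partial_order_on_set_def by blast
  define P where "P = PiE {..<N} X"
  define S where "S = P \<times> P"
  define R where "R p q = (\<forall>j<N. le j (fst p j) (fst q j) \<and> le j (snd q j) (snd p j))" for p q :: "(nat \<Rightarrow> 'a) \<times> (nat \<Rightarrow> 'a)"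
  define \<rho> where "\<rho> p q = max (Dm N d (fst p) (fst q)) (Dm N d (snd p) (snd q))" for p q :: "(nat \<Rightarrow> 'a) \<times> (nat \<Rightarrow> 'a)"
  define G where "G x y = (\<lambda>i. if i < N then T i (sigma N eps i x y) else undefined)" for x y
  define F where "F p = (G (fst p) (snd p), G (snd p) (fst p))" for p :: "(nat \<Rightarrow> 'a) \<times> (nat \<Rightarrow> 'a)"
  have GP: "G x y \<in> P" if "x \<in> P" "y \<in> P" for x y
  proof -
    have "T i (sigma N eps i x y) \<in> X i" if "i < N" for i
      using T_maps[OF that sigma_in] \<open>x \<in> P\<close> \<open>y \<in> P\<close> unfolding P_def by blast
    then show ?thesis by (auto simp: G_def P_def PiE_iff extensional_def)
  qed
  have FS: "F p \<in> S" if "p \<in> S" for p using that GP by (auto simp: F_def S_def)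
  have inX: "x j \<in> X j" if "x \<in> P" "j < N" for x j using that by (auto simp: P_def PiE_iff)
  have Dnn: "0 \<le> Dm N d x y" for x y using Dm_ge[OF N0] dnn[OF N0] order_trans by blast
  have rnn: "0 \<le> \<rho> p q" for p q using Dnn by (simp add: \<rho>_def max.coboundedI1)
  have rge1: "d j (fst p j) (fst q j) \<le> \<rho> p q" if "j < N" for j p q
    unfolding \<rho>_def by (rule max.coboundedI1[OF Dm_ge[OF that]])
  have rge2: "d j (snd p j) (snd q j) \<le> \<rho> p q" if "j < N" for j p q
    unfolding \<rho>_def by (rule max.coboundedI2[OF Dm_ge[OF that]])
  have rge1': "d j (fst q j) (fst p j) \<le> \<rho> p q" if "j < N" for j p q
    using rge1[OF that, of p q] dcom[OF that, of "fst q j" "fst p j"] by linarith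
  have rge2': "d j (snd q j) (snd p j) \<le> \<rho> p q" if "j < N" for j p q
    using rge2[OF that, of p q] dcom[OF that, of "snd q j" "snd p j"] by linarith
  have Dsym: "Dm N d x y = Dm N d y x" for x y unfolding Dm_def using dcom by (auto intro!: arg_cong[where f=Max])
  have rsym: "\<rho> p q = \<rho> q p" for p q using Dsym by (simp add: \<rho>_def)
  have Dtri: "Dm N d x z \<le> Dm N d x y + Dm N d y z" if "x \<in> P" "y \<in> P" "z \<in> P" for x y z
    unfolding Dm_le_iff[OF N0]
  proof (intro allI impI)
    fix j assume j: "j < N"
    have "d j (x j) (z j) \<le> d j (x j) (y j) + d j (y j) (z j)" using dtri j inX that by blast
    also have "\<dots> \<le> Dm N d x y + Dm N d y z" using Dm_ge[OF j] by (intro add_mono)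
    finally show "d j (x j) (z j) \<le> Dm N d x y + Dm N d y z" .
  qed
  have rtri: "\<rho> p r \<le> \<rho> p q + \<rho> q r" if "p \<in> S" "q \<in> S" "r \<in> S" for p q r
  proof -
    have "Dm N d (fst p) (fst r) \<le> \<rho> p q + \<rho> q r"
      using Dtri[of "fst p" "fst q" "fst r"] that unfolding \<rho>_def S_def by force
    moreover have "Dm N d (snd p) (snd r) \<le> \<rho> p q + \<rho> q r"
      using Dtri[of "snd p" "snd q" "snd r"] that unfolding \<rho>_def S_def by force
    ultimately show ?thesis by (simp add: \<rho>_def)
  qed
  have Dzero: "x = y" if xP: "x \<in> P" and yP: "y \<in> P" and D0: "Dm N d x y \<le> 0" for x y
  proof -
    have "x j = y j" if j: "j < N" for j
    proof -
      have "d j (x j) (y j) = 0" using Dm_ge[OF j, of d x y] dnn[OF j, of "x j" "y j"] D0 by linarith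
      then show ?thesis using dzero[OF j inX[OF xP j] inX[OF yP j]] by simp
    qed
    then show ?thesis using xP yP by (intro PiE_ext[of x "{..<N}" X]) (auto simp: P_def)
  qed
  have rzero: "p = q" if "p \<in> S" "q \<in> S" "\<rho> p q = 0" for p q
  proof -
    have "fst p = fst q" using Dzero[of "fst p" "fst q"] that unfolding S_def \<rho>_def by force
    moreover have "snd p = snd q" using Dzero[of "snd p" "snd q"] that unfolding S_def \<rho>_def by force
    ultimately show ?thesis by (simp add: prod_eq_iff)
  qed
  have Dself: "Dm N d x x = 0" if "x \<in> P" for x
    using Dm_le_iff[OF N0, of d x x 0] dzero inX[OF that] Dnn[of x x] by force
  have rrefl: "\<rho> p p = 0" if "p \<in> S" for p using that Dself by (auto simp: S_def \<rho>_def)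
  have Rrefl: "R p p" if "p \<in> S" for p using that leR inX by (auto simp: S_def R_def)
  have Rtrans: "R p r" if pS: "p \<in> S" and qS: "q \<in> S" and rS: "r \<in> S" and pq: "R p q" and qr: "R q r" for p q r
    unfolding R_def
  proof (intro allI impI conjI)
    fix j assume j: "j < N"
    have m: "fst p j \<in> X j" "fst q j \<in> X j" "fst r j \<in> X j" "snd p j \<in> X j" "snd q j \<in> X j" "snd r j \<in> X j"
      using pS qS rS inX j by (auto simp: S_def)
    have h: "le j (fst p j) (fst q j)" "le j (snd q j) (snd p j)" "le j (fst q j) (fst r j)" "le j (snd r j) (snd q j)"
      using pq qr j unfolding R_def by auto
    show "le j (fst p j) (fst r j)" using leT[OF j m(1) m(2) m(3) h(1) h(3)] .
    show "le j (snd r j) (snd p j)" using leT[OF j m(6) m(5) m(4) h(4) h(2)] .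
  qed
  have prec1: "prec N le eps i (sigma N eps i (fst p) (snd p)) (sigma N eps i (fst q) (snd q))"
    if "R p q" for p q i using that by (auto simp: prec_def sigma_def R_def)
  have prec2: "prec N le eps i (sigma N eps i (snd q) (fst q)) (sigma N eps i (snd p) (fst p))"
    if "R p q" for p q i using that by (auto simp: prec_def sigma_def R_def)
  have Tm: "le i (T i x) (T i y)" if "i < N" "x \<in> P" "y \<in> P" "prec N le eps i x y" for i x y
    using T_mono[OF pm order T_maps that(1) that(2)[unfolded P_def] that(3)[unfolded P_def] that(4)] .
  have sigP: "sigma N eps i x y \<in> P" if "x \<in> P" "y \<in> P" for x y i
    unfolding P_def by (rule sigma_in) (use that in \<open>auto simp: P_def\<close>)
  have Rmono: "R (F p) (F q)" if pS: "p \<in> S" and qS: "q \<in> S" and pq: "R p q" for p q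
    unfolding R_def
  proof (intro allI impI conjI)
    fix i assume i: "i < N"
    have P4: "fst p \<in> P" "snd p \<in> P" "fst q \<in> P" "snd q \<in> P" using pS qS by (auto simp: S_def)
    show "le i (fst (F p) i) (fst (F q) i)"
      using Tm[OF i sigP[OF P4(1,2)] sigP[OF P4(3,4)] prec1[OF pq]] i by (simp add: F_def G_def)
    show "le i (snd (F q) i) (snd (F p) i)"
      using Tm[OF i sigP[OF P4(4,3)] sigP[OF P4(2,1)] prec2[OF pq]] i by (simp add: F_def G_def)
  qed
  have Rbid: "\<exists>r\<in>S. R r p \<and> R r q" if "p \<in> S" "q \<in> S" for p q
  proof -
    have "\<forall>j<N. \<exists>l\<in>X j. le j l (fst p j) \<and> le j l (fst q j)"
      using bidir inX that unfolding bi_directed_def S_def by (metis mem_Times_iff)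
    then obtain l where l: "\<And>j. j < N \<Longrightarrow> l j \<in> X j \<and> le j (l j) (fst p j) \<and> le j (l j) (fst q j)"
      by metis
    have "\<forall>j<N. \<exists>u\<in>X j. le j (snd p j) u \<and> le j (snd q j) u"
      using bidir inX that unfolding bi_directed_def S_def by (metis mem_Times_iff)
    then obtain u where u: "\<And>j. j < N \<Longrightarrow> u j \<in> X j \<and> le j (snd p j) (u j) \<and> le j (snd q j) (u j)"
      by metis
    define r where "r = (restrict l {..<N}, restrict u {..<N})"
    have "r \<in> S" using l u by (auto simp: r_def S_def P_def)
    moreover have "R r p \<and> R r q" using l u by (auto simp: r_def R_def)
    ultimately show ?thesis by blast
  qed
  have Dsig1: "Dm N d (sigma N eps i (fst p) (snd p)) (sigma N eps i (fst q) (snd q)) \<le> \<rho> p q" for p q i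
    unfolding Dm_le_iff[OF N0]
  proof (intro allI impI)
    fix j assume j: "j < N"
    have "d j (fst p j) (fst q j) \<le> \<rho> p q" using rge1[OF j] .
    moreover have "d j (snd p j) (snd q j) \<le> \<rho> p q" using rge2[OF j] .
    ultimately show "d j (sigma N eps i (fst p) (snd p) j) (sigma N eps i (fst q) (snd q) j) \<le> \<rho> p q"
      using j by (simp add: sigma_def)
  qed
  have Dsig2: "Dm N d (sigma N eps i (snd q) (fst q)) (sigma N eps i (snd p) (fst p)) \<le> \<rho> p q" for p q i
    unfolding Dm_le_iff[OF N0]
  proof (intro allI impI)
    fix j assume j: "j < N"
    have "d j (fst q j) (fst p j) \<le> \<rho> p q" using rge1'[OF j] .
    moreover have "d j (snd q j) (snd p j) \<le> \<rho> p q" using rge2'[OF j] .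
    ultimately show "d j (sigma N eps i (snd q) (fst q) j) (sigma N eps i (snd p) (fst p) j) \<le> \<rho> p q"
      using j by (simp add: sigma_def)
  qed
  have contr: "\<rho> (F p) (F q) \<le> \<phi> (\<rho> p q)" if pq: "p \<in> S" "q \<in> S" "R p q" for p q
  proof -
    have fp: "fst p \<in> P" "snd p \<in> P" "fst q \<in> P" "snd q \<in> P" using pq by (auto simp: S_def)
    have c1: "d i (G (fst p) (snd p) i) (G (fst q) (snd q) i) \<le> \<phi> (\<rho> p q)" if i: "i < N" for i
    proof -
      have "d i (T i (sigma N eps i (fst p) (snd p))) (T i (sigma N eps i (fst q) (snd q)))
          \<le> \<phi> (Dm N d (sigma N eps i (fst p) (snd p)) (sigma N eps i (fst q) (snd q)))"
        using contraction[OF i sigP[OF fp(1,2), unfolded P_def] sigP[OF fp(3,4), unfolded P_def] prec1[OF pq(3)]] by (simp add: Dm_def)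
      also have "\<dots> \<le> \<phi> (\<rho> p q)" using Phi_mono[OF phi Dnn Dsig1] .
      finally show ?thesis using i by (simp add: G_def)
    qed
    have c2: "d i (G (snd p) (fst p) i) (G (snd q) (fst q) i) \<le> \<phi> (\<rho> p q)" if i: "i < N" for i
    proof -
      have "d i (T i (sigma N eps i (snd q) (fst q))) (T i (sigma N eps i (snd p) (fst p)))
          \<le> \<phi> (Dm N d (sigma N eps i (snd q) (fst q)) (sigma N eps i (snd p) (fst p)))"
        using contraction[OF i sigP[OF fp(4,3), unfolded P_def] sigP[OF fp(2,1), unfolded P_def] prec2[OF pq(3)]] by (simp add: Dm_def)
      also have "\<dots> \<le> \<phi> (\<rho> p q)" using Phi_mono[OF phi Dnn Dsig2] .
      finally show ?thesis using i dcom[OF i] by (simp add: G_def)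
    qed
    show ?thesis using c1 c2 unfolding \<rho>_def F_def by (simp add: Dm_le_iff[OF N0])
  qed
  have rho_le_sum: "\<rho> p q \<le> (\<Sum>j<N. d j (fst p j) (fst q j)) + (\<Sum>j<N. d j (snd p j) (snd q j))" for p q
  proof -
    have s1: "0 \<le> (\<Sum>j<N. d j (fst p j) (fst q j))" "0 \<le> (\<Sum>j<N. d j (snd p j) (snd q j))"
      using dnn by (auto intro: sum_nonneg)
    have "Dm N d (fst p) (fst q) \<le> (\<Sum>j<N. d j (fst p j) (fst q j))" using Dm_le_sum[OF N0] dnn by blast
    moreover have "Dm N d (snd p) (snd q) \<le> (\<Sum>j<N. d j (snd p j) (snd q j))" using Dm_le_sum[OF N0] dnn by blast
    ultimately show ?thesis using s1 by (simp add: \<rho>_def)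
  qed
  have to_rho0: "(\<lambda>n. \<rho> (t n) q) \<longlonglongrightarrow> 0"
    if h: "\<And>j. j < N \<Longrightarrow> (\<lambda>n. d j (fst (t n) j) (fst q j)) \<longlonglongrightarrow> 0 \<and> (\<lambda>n. d j (snd (t n) j) (snd q j)) \<longlonglongrightarrow> 0"
    for t :: "nat \<Rightarrow> (nat \<Rightarrow> 'a) \<times> (nat \<Rightarrow> 'a)" and q
  proof (rule real_tendsto_sandwich[where f="\<lambda>n. 0" and h="\<lambda>n. (\<Sum>j<N. d j (fst (t n) j) (fst q j)) + (\<Sum>j<N. d j (snd (t n) j) (snd q j))"])
    show "\<forall>\<^sub>F n in sequentially. 0 \<le> \<rho> (t n) q" using rnn by simp
    show "\<forall>\<^sub>F n in sequentially. \<rho> (t n) q \<le> (\<Sum>j<N. d j (fst (t n) j) (fst q j)) + (\<Sum>j<N. d j (snd (t n) j) (snd q j))"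
      using rho_le_sum by simp
    show "(\<lambda>n. 0::real) \<longlonglongrightarrow> 0" by simp
    have "(\<lambda>n. (\<Sum>j<N. d j (fst (t n) j) (fst q j)) + (\<Sum>j<N. d j (snd (t n) j) (snd q j))) \<longlonglongrightarrow> 0 + 0"
      using h by (intro tendsto_add tendsto_null_sum) auto
    then show "(\<lambda>n. (\<Sum>j<N. d j (fst (t n) j) (fst q j)) + (\<Sum>j<N. d j (snd (t n) j) (snd q j))) \<longlonglongrightarrow> 0" by simp
  qed
  have from_rho0: "(\<lambda>n. d j (fst (t n) j) (fst q j)) \<longlonglongrightarrow> 0 \<and> (\<lambda>n. d j (snd (t n) j) (snd q j)) \<longlonglongrightarrow> 0"
    if h: "(\<lambda>n. \<rho> (t n) q) \<longlonglongrightarrow> 0" and j: "j < N"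
    for t :: "nat \<Rightarrow> (nat \<Rightarrow> 'a) \<times> (nat \<Rightarrow> 'a)" and q j
  proof
    show "(\<lambda>n. d j (fst (t n) j) (fst q j)) \<longlonglongrightarrow> 0"
    proof (rule real_tendsto_sandwich[where f="\<lambda>n. 0" and h="\<lambda>n. \<rho> (t n) q"])
      show "\<forall>\<^sub>F n in sequentially. 0 \<le> d j (fst (t n) j) (fst q j)" using dnn[OF j] by simp
      show "\<forall>\<^sub>F n in sequentially. d j (fst (t n) j) (fst q j) \<le> \<rho> (t n) q"
        using rge1[OF j] by simp
    qed (use h in auto)
    show "(\<lambda>n. d j (snd (t n) j) (snd q j)) \<longlonglongrightarrow> 0"
    proof (rule real_tendsto_sandwich[where f="\<lambda>n. 0" and h="\<lambda>n. \<rho> (t n) q"])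
      show "\<forall>\<^sub>F n in sequentially. 0 \<le> d j (snd (t n) j) (snd q j)" using dnn[OF j] by simp
      show "\<forall>\<^sub>F n in sequentially. d j (snd (t n) j) (snd q j) \<le> \<rho> (t n) q"
        using rge2[OF j] by simp
    qed (use h in auto)
  qed
  have limuniq: "q1 = q2" if "\<And>n. t n \<in> S" "q1 \<in> S" "q2 \<in> S"
    "(\<lambda>n. \<rho> (t n) q1) \<longlonglongrightarrow> 0" "(\<lambda>n. \<rho> (t n) q2) \<longlonglongrightarrow> 0" for t q1 q2
  proof -
    have le: "\<rho> q1 q2 \<le> \<rho> (t n) q1 + \<rho> (t n) q2" for n
      using rtri[OF that(2) that(1) that(3)] rsym by simp
    have h0: "(\<lambda>n. \<rho> (t n) q1 + \<rho> (t n) q2) \<longlonglongrightarrow> 0 + 0" using that by (intro tendsto_add)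
    have h: "(\<lambda>n. \<rho> (t n) q1 + \<rho> (t n) q2) \<longlonglongrightarrow> 0" using h0 by simp
    have "\<rho> q1 q2 \<le> 0"
      by (rule tendsto_le[OF trivial_limit_sequentially h tendsto_const]) (use le in simp)
    then show ?thesis using rzero that rnn[of q1 q2] by simp
  qed
  have compl: "\<exists>p\<in>S. (\<lambda>n. \<rho> (s n) p) \<longlonglongrightarrow> 0"
    if sS: "\<forall>n. s n \<in> S" and cau: "\<forall>e>0. \<exists>M. \<forall>m\<ge>M. \<forall>n\<ge>M. \<rho> (s m) (s n) \<le> e" for s
  proof -
    have sP: "fst (s n) \<in> P" "snd (s n) \<in> P" for n using sS[rule_format, of n] by (auto simp: S_def mem_Times_iff)
    have cj: "\<exists>M. \<forall>n n'. M \<le> n \<longrightarrow> M \<le> n' \<longrightarrow> d j (f (s n) j) (f (s n') j) < e"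
      if j: "j < N" and e: "e > 0" and f: "f = fst \<or> f = snd" for j e f
    proof -
      obtain M where M: "\<forall>m\<ge>M. \<forall>n\<ge>M. \<rho> (s m) (s n) \<le> e / 2" using cau e by (meson half_gt_zero)
      have "d j (f (s n) j) (f (s n') j) < e" if "M \<le> n" "M \<le> n'" for n n'
      proof -
        have "d j (f (s n) j) (f (s n') j) \<le> \<rho> (s n) (s n')"
          using f rge1[OF j, of "s n" "s n'"] rge2[OF j, of "s n" "s n'"] by auto
        also have "\<dots> \<le> e / 2" using M that by blast
        finally show ?thesis using e by simp
      qed
      then show ?thesis by blast
    qed
    have ex: "\<exists>a. limitin (Metric_space.mtopology (X j) (d j)) (\<lambda>n. f (s n) j) a sequentially"
      if j: "j < N" and f: "f = fst \<or> f = snd" for j f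
    proof -
      have "Metric_space.MCauchy (X j) (d j) (\<lambda>n. f (s n) j)"
        unfolding Metric_space.MCauchy_def[OF metric[OF j]]
        using cj[OF j _ f] inX[OF _ j] sP f by auto
      then show ?thesis using complete[OF j] unfolding Metric_space.mcomplete_def[OF metric[OF j]] by blast
    qed
    obtain a where a: "\<And>j. j < N \<Longrightarrow> limitin (Metric_space.mtopology (X j) (d j)) (\<lambda>n. fst (s n) j) (a j) sequentially"
      using ex[of _ fst] by metis
    obtain b where b: "\<And>j. j < N \<Longrightarrow> limitin (Metric_space.mtopology (X j) (d j)) (\<lambda>n. snd (s n) j) (b j) sequentially"
      using ex[of _ snd] by metis
    define p where "p = (restrict a {..<N}, restrict b {..<N})"
    have "p \<in> S" using a b lim_iff by (auto simp: p_def S_def P_def)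
    moreover have "(\<lambda>n. \<rho> (s n) p) \<longlonglongrightarrow> 0"
      by (rule to_rho0) (use a b lim_iff in \<open>auto simp: p_def\<close>)
    ultimately show ?thesis by blast
  qed
  have contT: "(\<lambda>n. d i (T i (sigma N eps i (xs n) (ys n))) (T i (sigma N eps i a b))) \<longlonglongrightarrow> 0"
    if cont: "continuous_map (product_topology (\<lambda>j. Metric_space.mtopology (X j) (d j)) {..<N})
                (Metric_space.mtopology (X i) (d i)) (T i)"
    and i: "i < N" and xy: "\<And>n. xs n \<in> P" "\<And>n. ys n \<in> P" and ab: "a \<in> P" "b \<in> P"
    and cx: "\<And>j. j < N \<Longrightarrow> (\<lambda>n. d j (xs n j) (a j)) \<longlonglongrightarrow> 0"
    and cy: "\<And>j. j < N \<Longrightarrow> (\<lambda>n. d j (ys n j) (b j)) \<longlonglongrightarrow> 0" for i xs ys a b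
  proof -
    have tp: "topspace (product_topology (\<lambda>j. Metric_space.mtopology (X j) (d j)) {..<N}) = P"
      using Metric_space.topspace_mtopology[OF metric] by (auto simp: P_def PiE_iff)
    have lp: "limitin (product_topology (\<lambda>j. Metric_space.mtopology (X j) (d j)) {..<N})
       (\<lambda>n. sigma N eps i (xs n) (ys n)) (sigma N eps i a b) sequentially"
      unfolding limitin_componentwise tp
    proof (intro conjI ballI)
      show "sigma N eps i a b \<in> extensional {..<N}" by (auto simp: sigma_def extensional_def)
      show "\<forall>\<^sub>F n in sequentially. sigma N eps i (xs n) (ys n) \<in> P"
        using sigP[OF xy(1) xy(2)] by simp
      fix j assume "j \<in> {..<N}"
      hence j: "j < N" by simp
      show "limitin (Metric_space.mtopology (X j) (d j)) (\<lambda>n. sigma N eps i (xs n) (ys n) j) (sigma N eps i a b j) sequentially"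
        unfolding lim_iff[OF j] using j inX xy ab cx[OF j] cy[OF j] by (auto simp: sigma_def)
    qed
    have "limitin (Metric_space.mtopology (X i) (d i)) (T i \<circ> (\<lambda>n. sigma N eps i (xs n) (ys n))) (T i (sigma N eps i a b)) sequentially"
      by (rule continuous_map_limit[OF cont lp])
    then show ?thesis unfolding lim_iff[OF i] by (simp add: o_def)
  qed
  have closed: "F p = p"
    if sS: "\<forall>n. s n \<in> S" and sF: "\<forall>n. s (Suc n) = F (s n)" and sR: "\<forall>m n. m \<le> n \<longrightarrow> R (s m) (s n)"
      and pS: "p \<in> S" and sl: "(\<lambda>n. \<rho> (s n) p) \<longlonglongrightarrow> 0" for s p
  proof -
    have sP: "fst (s n) \<in> P" "snd (s n) \<in> P" for n using sS[rule_format, of n] by (auto simp: S_def mem_Times_iff)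
    have pP: "fst p \<in> P" "snd p \<in> P" using pS by (auto simp: S_def)
    have cF: "(\<lambda>n. \<rho> (F (s n)) (F p)) \<longlonglongrightarrow> 0"
      using d1_d2
    proof
      assume cont: "\<forall>i<N. continuous_map
                (product_topology (\<lambda>j. Metric_space.mtopology (X j) (d j)) {..<N})
                (Metric_space.mtopology (X i) (d i)) (T i)"
      show ?thesis
      proof (rule to_rho0)
        fix i assume i: "i < N"
        have c1: "\<And>j. j < N \<Longrightarrow> (\<lambda>n. d j (fst (s n) j) (fst p j)) \<longlonglongrightarrow> 0"
          and c2: "\<And>j. j < N \<Longrightarrow> (\<lambda>n. d j (snd (s n) j) (snd p j)) \<longlonglongrightarrow> 0"
          using from_rho0[OF sl] by auto
        show "(\<lambda>n. d i (fst (F (s n)) i) (fst (F p) i)) \<longlonglongrightarrow> 0 \<and> (\<lambda>n. d i (snd (F (s n)) i) (snd (F p) i)) \<longlonglongrightarrow> 0"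
          using contT[OF cont[rule_format, OF i] i sP(1) sP(2) pP c1 c2]
                contT[OF cont[rule_format, OF i] i sP(2) sP(1) pP(2) pP(1) c2 c1] i
          by (simp add: F_def G_def)
      qed
    next
      assume mono: "\<forall>i<N. \<forall>s l. range s \<subseteq> X i \<longrightarrow>
                limitin (Metric_space.mtopology (X i) (d i)) s l sequentially \<longrightarrow>
                ((\<forall>m n. m \<le> n \<longrightarrow> le i (s m) (s n)) \<longrightarrow> (\<forall>n. le i (s n) l)) \<and>
                ((\<forall>m n. m \<le> n \<longrightarrow> le i (s n) (s m)) \<longrightarrow> (\<forall>n. le i l (s n)))"
      have Rp: "R (s n) p" for n
        unfolding R_def
      proof (intro allI impI conjI)
        fix j assume j: "j < N"
        have l1: "limitin (Metric_space.mtopology (X j) (d j)) (\<lambda>n. fst (s n) j) (fst p j) sequentially"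
          unfolding lim_iff[OF j] using from_rho0[OF sl j] inX sP pP j by auto
        have l2: "limitin (Metric_space.mtopology (X j) (d j)) (\<lambda>n. snd (s n) j) (snd p j) sequentially"
          unfolding lim_iff[OF j] using from_rho0[OF sl j] inX sP pP j by auto
        have r1: "range (\<lambda>n. fst (s n) j) \<subseteq> X j" "range (\<lambda>n. snd (s n) j) \<subseteq> X j" using inX sP j by auto
        have m1: "\<forall>m n. m \<le> n \<longrightarrow> le j (fst (s m) j) (fst (s n) j)" using sR j unfolding R_def by blast
        have m2: "\<forall>m n. m \<le> n \<longrightarrow> le j (snd (s n) j) (snd (s m) j)" using sR j unfolding R_def by blast
        show "le j (fst (s n) j) (fst p j)" using mono[rule_format, OF j r1(1) l1] m1 by blast
        show "le j (snd p j) (snd (s n) j)" using mono[rule_format, OF j r1(2) l2] m2 by blast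
      qed
      show ?thesis
      proof (rule real_tendsto_sandwich[where f="\<lambda>n. 0" and h="\<lambda>n. \<rho> (s n) p"])
        show "\<forall>\<^sub>F n in sequentially. 0 \<le> \<rho> (F (s n)) (F p)" using rnn by simp
        have "\<rho> (F (s n)) (F p) \<le> \<rho> (s n) p" for n
          using contr[OF sS[rule_format] pS Rp] Phi_le[OF phi rnn] order_trans by blast
        then show "\<forall>\<^sub>F n in sequentially. \<rho> (F (s n)) (F p) \<le> \<rho> (s n) p" by simp
      qed (use sl in auto)
    qed
    have a1: "(\<lambda>n. \<rho> (s (Suc n)) p) \<longlonglongrightarrow> 0" using sl by (rule LIMSEQ_Suc)
    have a2: "(\<lambda>n. \<rho> (s (Suc n)) (F p)) \<longlonglongrightarrow> 0" using cF sF by simp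
    show ?thesis using limuniq[of "\<lambda>n. s (Suc n)" "F p" p, OF _ FS[OF pS] pS a2 a1] sS by blast
  qed
  have p0S: "(x0, y0) \<in> S" using x0 y0 by (simp add: S_def P_def)
  have p0R: "R (x0, y0) (F (x0, y0))" using x0_sub y0_sup by (simp add: R_def F_def G_def)
  obtain p where pS: "p \<in> S" and Fp: "F p = p" and uniq: "\<forall>q\<in>S. F q = q \<longrightarrow> q = p"
    and attr: "\<forall>w\<in>S. (\<lambda>n. \<rho> ((F^^n) w) p) \<longlonglongrightarrow> 0"
  proof -
    have "\<exists>p\<in>S. F p = p \<and> (\<forall>q\<in>S. F q = q \<longrightarrow> q = p) \<and> (\<forall>w\<in>S. (\<lambda>n. \<rho> ((F^^n) w) p) \<longlonglongrightarrow> 0)"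
      by (rule abstract_fp[where \<phi>=\<phi> and S=S and F=F and R=R and \<rho>=\<rho>],
          fact phi, fact FS, fact Rrefl, fact Rtrans, fact Rmono, fact Rbid, fact rnn, fact rsym,
          fact rtri, fact rzero, fact rrefl, fact contr, fact compl, fact closed, fact p0S, fact p0R)
    then show ?thesis using that by blast
  qed
  define a where "a = fst p"
  define b where "b = snd p"
  have p_ab: "p = (a, b)" by (simp add: a_def b_def)
  have aP: "a \<in> P" and bP: "b \<in> P" using pS by (auto simp: S_def a_def b_def)
  have Gab: "G a b = a" "G b a = b" using Fp by (auto simp: F_def p_ab)
  have "F (b, a) = (b, a)" using Gab by (simp add: F_def)
  hence "(b, a) = p" using uniq aP bP by (simp add: S_def)
  hence "b = fst p" by (metis fst_conv)
  hence ab: "b = a" unfolding a_def .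
  have Ga: "G a a = a" using Gab ab by simp
  have fixT: "T i a = a i" if "i < N" for i
    using fun_cong[OF Ga, of i] that sigma_same[OF aP[unfolded P_def]] by (simp add: G_def)
  show ?thesis
  proof (intro bexI conjI allI impI ballI)
    show "a \<in> PiE {..<N} X" using aP by (simp add: P_def)
    show "T i a = a i" if "i < N" for i using fixT that .
  next
    fix z assume zP: "z \<in> PiE {..<N} X" and zfix: "\<forall>i<N. T i z = z i"
    have "G z z = z"
    proof
      fix i show "G z z i = z i"
        using zfix zP sigma_same[OF zP] by (auto simp: G_def PiE_iff extensional_def)
    qed
    hence "F (z, z) = (z, z)" by (simp add: F_def)
    hence "(z, z) = p" using uniq zP by (simp add: S_def P_def)
    hence "z = fst p" by (metis fst_conv)
    thus "z = a" unfolding a_def .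
  next
    fix u v :: "nat \<Rightarrow> nat \<Rightarrow> 'a" and i
    assume u0: "u 0 \<in> PiE {..<N} X" and v0: "v 0 \<in> PiE {..<N} X"
      and rec: "\<forall>n. \<forall>i<N. u (Suc n) i = T i (sigma N eps i (u n) (v n)) \<and>
                          v (Suc n) i = T i (sigma N eps i (v n) (u n))"
      and i: "i < N"
    define w where "w n = (restrict (u n) {..<N}, restrict (v n) {..<N})" for n
    have w_it: "w n = (F^^n) (u 0, v 0)" for n
    proof (induction n)
      case 0 then show ?case using u0 v0 by (simp add: w_def PiE_iff extensional_restrict)
    next
      case (Suc n)
      have "w (Suc n) = F (w n)"
        unfolding w_def F_def G_def using rec by (auto simp: sigma_restrict)
      then show ?case using Suc by simp
    qed
    have FnS: "(F^^n) q \<in> S" if "q \<in> S" for n q using that by (induction n) (auto intro: FS)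
    have wS: "w n \<in> S" for n using FnS[of "(u 0, v 0)"] u0 v0 w_it by (simp add: S_def P_def)
    have conv: "(\<lambda>n. \<rho> (w n) p) \<longlonglongrightarrow> 0" using attr u0 v0 w_it by (simp add: S_def P_def)
    have uvX: "u n i \<in> X i" "v n i \<in> X i" for n using wS[of n] i by (auto simp: w_def S_def P_def PiE_iff)
    have du: "(\<lambda>n. d i (u n i) (a i)) \<longlonglongrightarrow> 0" and dv: "(\<lambda>n. d i (v n i) (a i)) \<longlonglongrightarrow> 0"
      using from_rho0[OF conv i] i ab by (auto simp: w_def p_ab)
    show "limitin (Metric_space.mtopology (X i) (d i)) (\<lambda>n. u n i) (a i) sequentially"
      unfolding lim_iff[OF i] using uvX du inX[OF aP i] by simp
    show "limitin (Metric_space.mtopology (X i) (d i)) (\<lambda>n. v n i) (a i) sequentially"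
      unfolding lim_iff[OF i] using uvX dv inX[OF aP i] by simp
  qed
qed
end
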